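(* For any $a\in\{1,\dots,2m\}$, $$\sum_{b=1}^{2m}\Big\{|\det\Gamma|^{1/2}(\Gamma^{-1})_{a,b},\,\Xi_b\Big\}=0,$$ on any open set where $\Gamma$ is invertible.
   Context: $\Xi=(\Xi_1,\dots,\Xi_{2m}):\mathbb{R}^{6N}\to\mathbb{R}^{2m}$ denotes the generalized constraints, either $\Xi(q,p)=(\xi(q),v_\xi(q,p))$ or $\Xi(q,p)=(\xi(q),p_\xi(q,p))$, where $\xi:\mathbb{R}^{3N}\to\mathbb{R}^m$ is smooth, $M$ is a constant symmetric positive definite matrix, $v_\xi=\nabla\xi^TM^{-1}p$, $G_M=\nabla\xi^TM^{-1}\nabla\xi$ (invertible) and $p_\xi=G_M^{-1}v_\xi$. $J=\begin{pmatrix}0&\mathrm{Id}_{3N}\\-\mathrm{Id}_{3N}&0\end{pmatrix}$; for scalar smooth $f,g$ on $\mathbb{R}^{6N}$, $\{f,g\}=\nabla f^TJ\nabla g$, and $\Gamma=(\{\Xi_a,\Xi_b\})_{a,b}=\nabla\Xi^TJ\nabla\Xi\in\mathbb{R}^{2m\times2m}$. *)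

theory Defs
  imports "HOL-Analysis.Analysis"
begin

definition dd :: "('a::real_normed_vector \<Rightarrow> real) \<Rightarrow> 'a \<Rightarrow> 'a \<Rightarrow> real" where
  "dd f v x = frechet_derivative f (at x) v"

fun Ck :: "nat \<Rightarrow> ('a::real_normed_vector \<Rightarrow> real) \<Rightarrow> bool" where
  "Ck 0 f = continuous_on UNIV f"
| "Ck (Suc k) f = ((\<forall>x. f differentiable (at x)) \<and> (\<forall>v. Ck k (\<lambda>x. dd f v x)))"

definition smooth_fun :: "('a::real_normed_vector \<Rightarrow> real) \<Rightarrow> bool" where
  "smooth_fun f = (\<forall>k. Ck k f)"

definition poisson ::
  "((real^'n) \<times> (real^'n) \<Rightarrow> real) \<Rightarrow> ((real^'n) \<times> (real^'n) \<Rightarrow> real) \<Rightarrow> (real^'n) \<times> (real^'n) \<Rightarrow> real" where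
  "poisson f g z = (\<Sum>i\<in>UNIV.
      dd f (axis i 1, 0) z * dd g (0, axis i 1) z - dd f (0, axis i 1) z * dd g (axis i 1, 0) z)"

definition grad_xi :: "(real^'n \<Rightarrow> real^'m) \<Rightarrow> 'm \<Rightarrow> real^'n \<Rightarrow> real^'n" where
  "grad_xi \<xi> j q = (\<chi> i. dd (\<lambda>y. \<xi> y $ j) (axis i 1) q)"

definition v_xi :: "(real^'n \<Rightarrow> real^'m) \<Rightarrow> real^'n^'n \<Rightarrow> real^'n \<Rightarrow> real^'n \<Rightarrow> real^'m" where
  "v_xi \<xi> M q p = (\<chi> j. grad_xi \<xi> j q \<bullet> (matrix_inv M *v p))"

definition G_M :: "(real^'n \<Rightarrow> real^'m) \<Rightarrow> real^'n^'n \<Rightarrow> real^'n \<Rightarrow> real^'m^'m" where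
  "G_M \<xi> M q = (\<chi> j k. grad_xi \<xi> j q \<bullet> (matrix_inv M *v grad_xi \<xi> k q))"

definition p_xi :: "(real^'n \<Rightarrow> real^'m) \<Rightarrow> real^'n^'n \<Rightarrow> real^'n \<Rightarrow> real^'n \<Rightarrow> real^'m" where
  "p_xi \<xi> M q p = matrix_inv (G_M \<xi> M q) *v v_xi \<xi> M q p"

text \<open>Generalized constraints, indexed by 'm + 'm (2m indices):
  Inl j gives xi_j, Inr j gives the j-th velocity/momentum constraint.\<close>
definition Xi_v :: "(real^'n \<Rightarrow> real^'m) \<Rightarrow> real^'n^'n \<Rightarrow> (real^'n) \<times> (real^'n) \<Rightarrow> real^('m + 'm)" where
  "Xi_v \<xi> M z = (\<chi> a. case a of Inl j \<Rightarrow> \<xi> (fst z) $ j | Inr j \<Rightarrow> v_xi \<xi> M (fst z) (snd z) $ j)"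

definition Xi_p :: "(real^'n \<Rightarrow> real^'m) \<Rightarrow> real^'n^'n \<Rightarrow> (real^'n) \<times> (real^'n) \<Rightarrow> real^('m + 'm)" where
  "Xi_p \<xi> M z = (\<chi> a. case a of Inl j \<Rightarrow> \<xi> (fst z) $ j | Inr j \<Rightarrow> p_xi \<xi> M (fst z) (snd z) $ j)"

definition Gamma :: "((real^'n) \<times> (real^'n) \<Rightarrow> real^'k) \<Rightarrow> (real^'n) \<times> (real^'n) \<Rightarrow> real^'k^'k" where
  "Gamma \<Xi> z = (\<chi> a b. poisson (\<lambda>w. \<Xi> w $ a) (\<lambda>w. \<Xi> w $ b) z)"

end

theory Submission
  imports Defs
begin



fun ck :: "nat \<Rightarrow> 'a::real_normed_vector set \<Rightarrow> ('a \<Rightarrow> real) \<Rightarrow> bool" where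
  "ck 0 S f = continuous_on S f"
| "ck (Suc k) S f = ((\<forall>x\<in>S. f differentiable (at x)) \<and> (\<forall>v. ck k S (\<lambda>x. dd f v x)))"

lemma dd_eq: "(f has_derivative f') (at x) \<Longrightarrow> dd f v x = f' v"
  unfolding dd_def using frechet_derivative_at by metis

lemma dd_works: "f differentiable (at x) \<Longrightarrow> (f has_derivative (\<lambda>v. dd f v x)) (at x)"
  unfolding dd_def using frechet_derivative_works by (metis eta_contract_eq)

lemma hd_local:
  assumes "open S" "x \<in> S" "\<And>y. y \<in> S \<Longrightarrow> f y = g y" "(f has_derivative f') (at x)"
  shows "(g has_derivative f') (at x)"
  by (rule has_derivative_transform_within_open[OF assms(4) assms(1,2)]) (use assms(3) in auto)

lemma dd_local:
  assumes "open S" "x \<in> S" "\<And>y. y \<in> S \<Longrightarrow> f y = g y"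
  shows "dd f v x = dd g v x"
proof -
  have "(f has_derivative f') (at x) \<longleftrightarrow> (g has_derivative f') (at x)" for f'
    using hd_local[OF assms(1,2), of f g f'] hd_local[OF assms(1,2), of g f f'] assms(3) by metis
  then show ?thesis unfolding dd_def frechet_derivative_def by simp
qed

lemma differentiable_local:
  assumes "open S" "x \<in> S" "\<And>y. y \<in> S \<Longrightarrow> f y = g y" "f differentiable (at x)"
  shows "g differentiable (at x)"
  using assms hd_local unfolding differentiable_def by metis

lemma ck_cong:
  assumes "open S" "\<And>y. y \<in> S \<Longrightarrow> f y = g y" "ck k S f"
  shows "ck k S g"
  using assms
proof (induction k arbitrary: f g)
  case 0
  then show ?case using continuous_on_cong by force
next
  case (Suc k)
  show ?case
  proof (simp only: ck.simps, intro conjI ballI allI)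
    fix x assume x: "x \<in> S"
    have "f differentiable (at x)" using Suc.prems(3) x by simp
    then show "g differentiable (at x)"
      by (rule differentiable_local[OF Suc.prems(1) x, rotated]) (use Suc.prems(2) in auto)
  next
    fix v
    show "ck k S (\<lambda>x. dd g v x)"
    proof (rule Suc.IH[of "\<lambda>x. dd f v x" "\<lambda>x. dd g v x"])
      show "open S" by fact
      show "ck k S (\<lambda>x. dd f v x)" using Suc.prems(3) by simp
      show "dd f v y = dd g v y" if "y \<in> S" for y by (rule dd_local[OF Suc.prems(1) that]) (rule Suc.prems(2))
    qed
  qed
qed

lemma ck_Suc_mono: "ck (Suc k) S f \<Longrightarrow> ck k S f"
proof (induction k arbitrary: f)
  case 0
  then show ?case
    by (auto intro!: continuous_at_imp_continuous_on differentiable_imp_continuous_within)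
next
  case (Suc k)
  have "ck (Suc k) S (\<lambda>x. dd f v x)" for v using Suc.prems by simp
  then have "ck k S (\<lambda>x. dd f v x)" for v using Suc.IH by blast
  then show ?case using Suc.prems by simp
qed

lemma ck_mono: "k \<le> l \<Longrightarrow> ck l S f \<Longrightarrow> ck k S f"
proof (induction l rule: dec_induct)
  case base then show ?case by simp
next
  case (step n) then show ?case using ck_Suc_mono by blast
qed

lemma ck_diff_at: "ck (Suc k) S f \<Longrightarrow> x \<in> S \<Longrightarrow> f differentiable (at x)"
  by auto

lemma dd_const: "dd (\<lambda>x. c) v = (\<lambda>x. 0)"
  by (rule ext, rule dd_eq, rule has_derivative_const)

lemma ck_const: "ck k S (\<lambda>x. c)"
proof (induction k arbitrary: c)
  case 0 then show ?case by simp
next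
  case (Suc k)
  then show ?case by (simp add: dd_const)
qed

lemma dd_linear: "bounded_linear L \<Longrightarrow> dd L v = (\<lambda>x. L v)"
  by (rule ext, rule dd_eq, erule bounded_linear.has_derivative[OF _ has_derivative_ident])

lemma ck_linear: "bounded_linear L \<Longrightarrow> ck k S L"
proof (cases k)
  case 0 assume "bounded_linear L" then show ?thesis
    using 0 linear_continuous_on by auto
next
  case (Suc k')
  assume L: "bounded_linear L"
  have "L differentiable (at x)" for x using L bounded_linear_imp_differentiable by blast
  then show ?thesis using Suc by (simp add: dd_linear[OF L] ck_const)
qed




lemma ck_SucI:
  assumes "open S" "\<And>x. x \<in> S \<Longrightarrow> F differentiable (at x)"
    "\<And>v. ck k S (G v)" "\<And>v x. x \<in> S \<Longrightarrow> dd F v x = G v x"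
  shows "ck (Suc k) S F"
  using assms ck_cong[OF assms(1), of "G v" "\<lambda>x. dd F v x" k for v] by auto

lemma ck_add: "open S \<Longrightarrow> ck k S f \<Longrightarrow> ck k S g \<Longrightarrow> ck k S (\<lambda>x. f x + g x)"
proof (induction k arbitrary: f g)
  case 0 then show ?case by (auto intro: continuous_intros)
next
  case (Suc k)
  show ?case
  proof (rule ck_SucI[OF Suc.prems(1), where G="\<lambda>v x. dd f v x + dd g v x"])
    fix x assume "x \<in> S"
    then have d: "f differentiable (at x)" "g differentiable (at x)" using Suc.prems by auto
    then show "(\<lambda>x. f x + g x) differentiable (at x)" by auto
    show "dd (\<lambda>x. f x + g x) v x = dd f v x + dd g v x" for v
      by (rule dd_eq) (intro has_derivative_add dd_works d)
  next
    fix v show "ck k S (\<lambda>x. dd f v x + dd g v x)" using Suc by simp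
  qed
qed

lemma ck_mult: "open S \<Longrightarrow> ck k S f \<Longrightarrow> ck k S g \<Longrightarrow> ck k S (\<lambda>x. f x * g x)"
proof (induction k arbitrary: f g)
  case 0 then show ?case by (auto intro: continuous_intros)
next
  case (Suc k)
  show ?case
  proof (rule ck_SucI[OF Suc.prems(1), where G="\<lambda>v x. f x * dd g v x + dd f v x * g x"])
    fix x assume "x \<in> S"
    then have d: "f differentiable (at x)" "g differentiable (at x)" using Suc.prems by auto
    then show "(\<lambda>x. f x * g x) differentiable (at x)" by auto
    show "dd (\<lambda>x. f x * g x) v x = f x * dd g v x + dd f v x * g x" for v
      by (rule dd_eq) (intro has_derivative_mult dd_works d)
  next
    fix v
    have "ck k S f" "ck k S g" using Suc.prems ck_Suc_mono by blast+
    moreover have "ck k S (\<lambda>x. dd f v x)" "ck k S (\<lambda>x. dd g v x)" using Suc.prems by auto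
    ultimately show "ck k S (\<lambda>x. f x * dd g v x + dd f v x * g x)"
      by (intro ck_add[OF Suc.prems(1)] Suc.IH[OF Suc.prems(1)])
  qed
qed

lemma ck_minus: "open S \<Longrightarrow> ck k S f \<Longrightarrow> ck k S (\<lambda>x. - f x)"
proof -
  assume "open S" "ck k S f"
  then have "ck k S (\<lambda>x. (-1) * f x)" by (rule ck_mult[OF _ ck_const])
  then show ?thesis by simp
qed

lemma ck_diff: "open S \<Longrightarrow> ck k S f \<Longrightarrow> ck k S g \<Longrightarrow> ck k S (\<lambda>x. f x - g x)"
proof -
  assume "open S" "ck k S f" "ck k S g"
  have "ck k S (\<lambda>x. f x + - g x)" 
    using ck_add[OF \<open>open S\<close> \<open>ck k S f\<close> ck_minus[OF \<open>open S\<close> \<open>ck k S g\<close>]] .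
  then show ?thesis by simp
qed

lemma ck_sum: "open S \<Longrightarrow> (\<And>i. i \<in> I \<Longrightarrow> ck k S (f i)) \<Longrightarrow> ck k S (\<lambda>x. \<Sum>i\<in>I. f i x)"
proof (induction I rule: infinite_finite_induct)
  case (infinite A) then show ?case by (simp add: ck_const)
next
  case empty then show ?case by (simp add: ck_const)
next
  case (insert i I) then show ?case by (simp add: ck_add)
qed

lemma ck_prod: "open S \<Longrightarrow> (\<And>i. i \<in> I \<Longrightarrow> ck k S (f i)) \<Longrightarrow> ck k S (\<lambda>x. \<Prod>i\<in>I. f i x)"
proof (induction I rule: infinite_finite_induct)
  case (infinite A) then show ?case by (simp add: ck_const)
next
  case empty then show ?case by (simp add: ck_const)
next
  case (insert i I) then show ?case by (simp add: ck_mult)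
qed

lemma ck_inverse: "open S \<Longrightarrow> ck k S f \<Longrightarrow> (\<And>x. x \<in> S \<Longrightarrow> f x \<noteq> 0) \<Longrightarrow> ck k S (\<lambda>x. inverse (f x))"
proof (induction k arbitrary: f)
  case 0 then show ?case by (auto intro: continuous_intros)
next
  case (Suc k)
  show ?case
  proof (rule ck_SucI[OF Suc.prems(1), where G="\<lambda>v x. - (inverse (f x) * dd f v x * inverse (f x))"])
    fix x assume x: "x \<in> S"
    then have d: "f differentiable (at x)" using Suc.prems by auto
    show "dd (\<lambda>x. inverse (f x)) v x = - (inverse (f x) * dd f v x * inverse (f x))" for v
      by (rule dd_eq) (intro Deriv.has_derivative_inverse dd_works d Suc.prems(3) x)
    then show "(\<lambda>x. inverse (f x)) differentiable (at x)"
      using Deriv.has_derivative_inverse[OF Suc.prems(3)[OF x] dd_works[OF d]] unfolding differentiable_def by blast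
  next
    fix v
    have "ck k S f" using Suc.prems ck_Suc_mono by blast
    then have "ck k S (\<lambda>x. inverse (f x))" using Suc by blast
    moreover have "ck k S (\<lambda>x. dd f v x)" using Suc.prems by auto
    ultimately show "ck k S (\<lambda>x. - (inverse (f x) * dd f v x * inverse (f x)))"
      by (intro ck_minus[OF Suc.prems(1)] ck_mult[OF Suc.prems(1)])
  qed
qed

lemma ck_divide: "open S \<Longrightarrow> ck k S f \<Longrightarrow> ck k S g \<Longrightarrow> (\<And>x. x \<in> S \<Longrightarrow> g x \<noteq> 0) \<Longrightarrow> ck k S (\<lambda>x. f x / g x)"
  unfolding divide_inverse by (intro ck_mult ck_inverse)

lemma ck_sqrt: "open S \<Longrightarrow> ck k S f \<Longrightarrow> (\<And>x. x \<in> S \<Longrightarrow> f x > 0) \<Longrightarrow> ck k S (\<lambda>x. sqrt (f x))"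
proof (induction k arbitrary: f)
  case 0 then show ?case by (auto intro: continuous_intros)
next
  case (Suc k)
  show ?case
  proof (rule ck_SucI[OF Suc.prems(1), where G="\<lambda>v x. dd f v x * (inverse (sqrt (f x)) / 2)"])
    fix x assume x: "x \<in> S"
    then have d: "f differentiable (at x)" using Suc.prems by auto
    have h: "((\<lambda>x. sqrt (f x)) has_derivative (\<lambda>v. dd f v x * (inverse (sqrt (f x)) / 2))) (at x)"
      by (rule DERIV_compose_FDERIV[OF DERIV_real_sqrt[OF Suc.prems(3)[OF x]] dd_works[OF d]])
    show "dd (\<lambda>x. sqrt (f x)) v x = dd f v x * (inverse (sqrt (f x)) / 2)" for v
      by (rule dd_eq[OF h])
    show "(\<lambda>x. sqrt (f x)) differentiable (at x)"
      using h unfolding differentiable_def by blast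
  next
    fix v
    have "ck k S f" using Suc.prems ck_Suc_mono by blast
    then have "ck k S (\<lambda>x. sqrt (f x))" using Suc by blast
    then have "ck k S (\<lambda>x. inverse (sqrt (f x)))"
      by (rule ck_inverse[OF Suc.prems(1)]) (metis Suc.prems(3) real_sqrt_gt_zero less_irrefl)
    then have c1: "ck k S (\<lambda>x. inverse (sqrt (f x)) * (1/2))"
      by (rule ck_mult[OF Suc.prems(1) _ ck_const])
    have c2: "ck k S (\<lambda>x. dd f v x)" using Suc.prems by auto
    have "ck k S (\<lambda>x. dd f v x * (inverse (sqrt (f x)) * (1/2)))"
      by (rule ck_mult[OF Suc.prems(1) c2 c1])
    then show "ck k S (\<lambda>x. dd f v x * (inverse (sqrt (f x)) / 2))" by simp
  qed
qed




lemma Ck_compose_linear: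
  assumes "Ck k g" "bounded_linear L" "open S"
  shows "ck k S (\<lambda>z. g (L z))"
  using assms(1)
proof (induction k arbitrary: g)
  case 0
  have "continuous_on UNIV g" using 0 by simp
  from continuous_on_compose2[OF this linear_continuous_on[OF assms(2)], of S]
  show ?case by simp
next
  case (Suc k)
  have dg: "g differentiable (at y)" for y using Suc.prems by simp
  have h: "((\<lambda>z. g (L z)) has_derivative (\<lambda>v. dd g (L v) (L z))) (at z)" for z
  proof -
    have "((g \<circ> L) has_derivative ((\<lambda>v. dd g v (L z)) \<circ> L)) (at z)"
      by (rule diff_chain_at[OF bounded_linear.has_derivative[OF assms(2) has_derivative_ident] dd_works[OF dg]])
    then show ?thesis by (simp only: o_def)
  qed
  show ?case
  proof (rule ck_SucI[OF assms(3), where G="\<lambda>v z. dd g (L v) (L z)"])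
    fix x show "(\<lambda>z. g (L z)) differentiable (at x)" using h unfolding differentiable_def by blast
    show "dd (\<lambda>z. g (L z)) v x = dd g (L v) (L x)" for v by (rule dd_eq[OF h])
  next
    fix v
    have "Ck k (\<lambda>x. dd g (L v) x)" using Suc.prems by simp
    then show "ck k S (\<lambda>z. dd g (L v) (L z))" using Suc.IH by blast
  qed
qed

lemma ck_det:
  fixes A :: "'a::real_normed_vector \<Rightarrow> real^'k^'k"
  assumes "open S" "\<And>i j. ck k S (\<lambda>x. A x $ i $ j)"
  shows "ck k S (\<lambda>x. det (A x))"
  unfolding det_def
  by (intro ck_sum[OF assms(1)] ck_mult[OF assms(1)] ck_const ck_prod[OF assms(1)] assms(2))

lemma matrix_inv_props:
  assumes "invertible A"
  shows "A ** matrix_inv A = mat 1" "matrix_inv A ** A = mat 1"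
  using someI_ex[OF assms[unfolded invertible_def]] unfolding matrix_inv_def by auto

lemma matrix_inv_entry:
  fixes A :: "real^'k^'k"
  assumes "invertible A"
  shows "matrix_inv A $ a $ b = det (\<chi> i l. if l = a then axis b 1 $ i else A $ i $ l) / det A"
proof -
  have d: "det A \<noteq> 0" using assms invertible_det_nz by blast
  have "A *v (matrix_inv A *v axis b 1) = axis b 1"
    by (simp add: matrix_vector_mul_assoc matrix_inv_props(1)[OF assms])
  then have "matrix_inv A *v axis b 1 = (\<chi> k. det(\<chi> i j. if j=k then axis b 1 $i else A$i$j) / det A)"
    using cramer[OF d] by blast
  then have "(matrix_inv A *v axis b 1) $ a = det (\<chi> i l. if l = a then axis b 1 $ i else A $ i $ l) / det A"
    by simp
  then show ?thesis by (simp add: matrix_vector_mult_basis column_def)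
qed

lemma ck_matrix_inv:
  fixes A :: "'a::real_normed_vector \<Rightarrow> real^'k^'k"
  assumes S: "open S" and c: "\<And>i j. ck k S (\<lambda>x. A x $ i $ j)" and inv: "\<And>x. x \<in> S \<Longrightarrow> invertible (A x)"
  shows "ck k S (\<lambda>x. matrix_inv (A x) $ a $ b)"
proof (rule ck_cong[OF S])
  show "det (\<chi> i l. if l = a then axis b 1 $ i else A y $ i $ l) / det (A y) = matrix_inv (A y) $ a $ b"
    if "y \<in> S" for y using matrix_inv_entry[OF inv[OF that]] by simp
  show "ck k S (\<lambda>y. det (\<chi> i l. if l = a then axis b 1 $ i else A y $ i $ l) / det (A y))"
  proof (rule ck_divide[OF S])
    show "ck k S (\<lambda>x. det (A x))" by (rule ck_det[OF S c])
    show "det (A x) \<noteq> 0" if "x \<in> S" for x using inv[OF that] invertible_det_nz by blast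
    show "ck k S (\<lambda>y. det (\<chi> i l. if l = a then axis b 1 $ i else A y $ i $ l))"
    proof (rule ck_det[OF S])
      fix i j
      show "ck k S (\<lambda>x. (\<chi> i l. if l = a then axis b 1 $ i else A x $ i $ l) $ i $ j)"
        by (cases "j = a") (simp_all add: ck_const c)
    qed
  qed
qed




lemma dd_scale:
  assumes "f differentiable (at y)"
  shows "dd f (c *\<^sub>R w) y = c * dd f w y"
proof -
  have "linear (\<lambda>v. dd f v y)" using dd_works[OF assms] has_derivative_linear by blast
  then show ?thesis using linear_scale by (metis real_scaleR_def)
qed

lemma line_deriv:
  assumes "f differentiable (at (y + s *\<^sub>R w))"
  shows "((\<lambda>s. f (y + s *\<^sub>R w)) has_real_derivative dd f w (y + s *\<^sub>R w)) (at s)"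
proof -
  have l: "((\<lambda>s. y + s *\<^sub>R w) has_derivative (\<lambda>h. h *\<^sub>R w)) (at s)"
    by (auto intro!: derivative_eq_intros)
  have "((f \<circ> (\<lambda>s. y + s *\<^sub>R w)) has_derivative ((\<lambda>v. dd f v (y + s *\<^sub>R w)) \<circ> (\<lambda>h. h *\<^sub>R w))) (at s)"
    by (rule diff_chain_at[OF l]) (simp add: dd_works[OF assms])
  moreover have "((\<lambda>v. dd f v (y + s *\<^sub>R w)) \<circ> (\<lambda>h. h *\<^sub>R w)) = (*) (dd f w (y + s *\<^sub>R w))"
    by (rule ext) (simp add: dd_scale[OF assms] mult.commute)
  ultimately show ?thesis unfolding has_field_derivative_def o_def by simp
qed

lemma second_diff_mvt:
  assumes S: "open S" and f: "ck 2 S f" and x: "x \<in> S" and r: "ball x r \<subseteq> S"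
    and t: "0 < t" "t * (norm u + norm v) < r"
  shows "\<exists>\<sigma> \<tau>. 0 < \<sigma> \<and> \<sigma> < t \<and> 0 < \<tau> \<and> \<tau> < t \<and>
     f (x + t *\<^sub>R u + t *\<^sub>R v) - f (x + t *\<^sub>R u) - f (x + t *\<^sub>R v) + f x
       = t * t * dd (\<lambda>y. dd f u y) v (x + \<sigma> *\<^sub>R u + \<tau> *\<^sub>R v)"
proof -
  have inS: "x + a *\<^sub>R u + b *\<^sub>R v \<in> S" if "0 \<le> a" "a \<le> t" "0 \<le> b" "b \<le> t" for a b
  proof -
    have "norm (a *\<^sub>R u + b *\<^sub>R v) \<le> a * norm u + b * norm v"
      using norm_triangle_ineq[of "a *\<^sub>R u" "b *\<^sub>R v"] that by simp
    also have "\<dots> \<le> t * norm u + t * norm v"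
      using that by (intro add_mono mult_right_mono) auto
    also have "\<dots> < r" using t by (simp add: algebra_simps)
    finally have "dist (x + (a *\<^sub>R u + b *\<^sub>R v)) x < r"
      by (simp add: dist_norm)
    then have "x + a *\<^sub>R u + b *\<^sub>R v \<in> ball x r"
      by (simp add: dist_commute add.assoc)
    then show ?thesis using r by blast
  qed
  have fd: "f differentiable (at y)" if "y \<in> S" for y using f that by (simp add: numeral_2_eq_2)
  have gd: "(\<lambda>y. dd f u y) differentiable (at y)" if "y \<in> S" for y
    using f that by (simp add: numeral_2_eq_2)
  define \<phi> where "\<phi> s = f ((x + t *\<^sub>R v) + s *\<^sub>R u) - f (x + s *\<^sub>R u)" for s
  have "\<exists>\<sigma>>0. \<sigma> < t \<and> \<phi> t - \<phi> 0 = (t - 0) * (dd f u ((x + t *\<^sub>R v) + \<sigma> *\<^sub>R u) - dd f u (x + \<sigma> *\<^sub>R u))"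
  proof (rule MVT2[OF t(1)])
    fix s assume s: "0 \<le> s" "s \<le> t"
    have "(x + t *\<^sub>R v) + s *\<^sub>R u \<in> S" using inS[OF s(1) s(2) less_imp_le[OF t(1)] order.refl] by (simp add: algebra_simps)
    moreover have "x + s *\<^sub>R u \<in> S" using inS[of s 0] s t by simp
    ultimately show "(\<phi> has_real_derivative (dd f u ((x + t *\<^sub>R v) + s *\<^sub>R u) - dd f u (x + s *\<^sub>R u))) (at s)"
      unfolding \<phi>_def by (intro DERIV_diff line_deriv fd)
  qed
  then obtain \<sigma> where \<sigma>: "0 < \<sigma>" "\<sigma> < t"
    and e1: "\<phi> t - \<phi> 0 = t * (dd f u ((x + \<sigma> *\<^sub>R u) + t *\<^sub>R v) - dd f u ((x + \<sigma> *\<^sub>R u) + 0 *\<^sub>R v))"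
    by (auto simp: algebra_simps)
  have "\<exists>\<tau>>0. \<tau> < t \<and> dd f u ((x + \<sigma> *\<^sub>R u) + t *\<^sub>R v) - dd f u ((x + \<sigma> *\<^sub>R u) + 0 *\<^sub>R v)
      = (t - 0) * dd (\<lambda>y. dd f u y) v ((x + \<sigma> *\<^sub>R u) + \<tau> *\<^sub>R v)"
  proof (rule MVT2[OF t(1)])
    fix s assume s: "0 \<le> s" "s \<le> t"
    have "(x + \<sigma> *\<^sub>R u) + s *\<^sub>R v \<in> S" using inS[of \<sigma> s] \<sigma> s by simp
    then show "((\<lambda>s. dd f u ((x + \<sigma> *\<^sub>R u) + s *\<^sub>R v)) has_real_derivative dd (\<lambda>y. dd f u y) v ((x + \<sigma> *\<^sub>R u) + s *\<^sub>R v)) (at s)"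
      by (intro line_deriv gd)
  qed
  then obtain \<tau> where \<tau>: "0 < \<tau>" "\<tau> < t"
    and e2: "dd f u ((x + \<sigma> *\<^sub>R u) + t *\<^sub>R v) - dd f u ((x + \<sigma> *\<^sub>R u) + 0 *\<^sub>R v)
      = t * dd (\<lambda>y. dd f u y) v ((x + \<sigma> *\<^sub>R u) + \<tau> *\<^sub>R v)" by auto
  have "f (x + t *\<^sub>R u + t *\<^sub>R v) - f (x + t *\<^sub>R u) - f (x + t *\<^sub>R v) + f x = \<phi> t - \<phi> 0"
    unfolding \<phi>_def by (simp add: algebra_simps)
  also have "\<dots> = t * t * dd (\<lambda>y. dd f u y) v (x + \<sigma> *\<^sub>R u + \<tau> *\<^sub>R v)"
    using e1 e2 by simp
  finally show ?thesis using \<sigma> \<tau> by blast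
qed




lemma dd2_sym:
  assumes S: "open S" and f: "ck 2 S f" and x: "x \<in> S"
  shows "dd (\<lambda>y. dd f u y) v x = dd (\<lambda>y. dd f v y) u x"
proof (rule ccontr)
  let ?a = "dd (\<lambda>y. dd f u y) v x" and ?b = "dd (\<lambda>y. dd f v y) u x"
  assume ne: "?a \<noteq> ?b"
  define e where "e = \<bar>?a - ?b\<bar> / 2"
  have e: "e > 0" using ne by (simp add: e_def)
  obtain r where r: "r > 0" "ball x r \<subseteq> S" using S x open_contains_ball by blast
  have c1: "continuous_on S (dd (\<lambda>y. dd f u y) v)" using f by (simp add: numeral_2_eq_2)
  have c2: "continuous_on S (dd (\<lambda>y. dd f v y) u)" using f by (simp add: numeral_2_eq_2)
  obtain d1 where d1: "d1 > 0" "\<And>y. y \<in> S \<Longrightarrow> dist y x < d1 \<Longrightarrow> dist (dd (\<lambda>y. dd f u y) v y) ?a < e"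
    using c1 x e unfolding continuous_on_iff by blast
  obtain d2 where d2: "d2 > 0" "\<And>y. y \<in> S \<Longrightarrow> dist y x < d2 \<Longrightarrow> dist (dd (\<lambda>y. dd f v y) u y) ?b < e"
    using c2 x e unfolding continuous_on_iff by blast
  define m where "m = min r (min d1 d2)"
  have m: "m > 0" "m \<le> r" "m \<le> d1" "m \<le> d2" using r d1 d2 by (auto simp: m_def)
  define t where "t = m / (2 * (norm u + norm v + 1))"
  have npos: "norm u + norm v + 1 > 0" by (simp add: add_nonneg_pos)
  have t: "t > 0" using m npos by (simp add: t_def)
  have "t * (norm u + norm v + 1) = m / 2" using npos unfolding t_def by (simp add: field_simps)
  then have tn: "t * (norm u + norm v + 1) < m" using m by simp
  have tn': "t * (norm u + norm v) < m" using tn t by (simp add: algebra_simps)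
  have tr1: "t * (norm u + norm v) < r" using tn' m by linarith
  have tr2: "t * (norm v + norm u) < r" using tr1 by (simp add: add.commute)
  have close: "dist (x + s *\<^sub>R w1 + s' *\<^sub>R w2) x < m"
    if "0 < s" "s < t" "0 < s'" "s' < t" "norm w1 + norm w2 = norm u + norm v" for s s' w1 w2
  proof -
    have "norm (s *\<^sub>R w1 + s' *\<^sub>R w2) \<le> s * norm w1 + s' * norm w2"
      using norm_triangle_ineq[of "s *\<^sub>R w1" "s' *\<^sub>R w2"] that by simp
    also have "\<dots> \<le> t * norm w1 + t * norm w2"
      using that by (intro add_mono mult_right_mono) auto
    also have "\<dots> = t * (norm u + norm v)" using that(5) by (metis distrib_left)
    also have "\<dots> < m" using tn' .
    finally show ?thesis by (simp add: dist_norm add.assoc)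
  qed
  obtain \<sigma> \<tau> where st: "0 < \<sigma>" "\<sigma> < t" "0 < \<tau>" "\<tau> < t"
    and E1: "f (x + t *\<^sub>R u + t *\<^sub>R v) - f (x + t *\<^sub>R u) - f (x + t *\<^sub>R v) + f x
       = t * t * dd (\<lambda>y. dd f u y) v (x + \<sigma> *\<^sub>R u + \<tau> *\<^sub>R v)"
    using second_diff_mvt[OF S f x r(2) t tr1] by blast
  obtain \<sigma>' \<tau>' where st': "0 < \<sigma>'" "\<sigma>' < t" "0 < \<tau>'" "\<tau>' < t"
    and E2: "f (x + t *\<^sub>R v + t *\<^sub>R u) - f (x + t *\<^sub>R v) - f (x + t *\<^sub>R u) + f x
       = t * t * dd (\<lambda>y. dd f v y) u (x + \<sigma>' *\<^sub>R v + \<tau>' *\<^sub>R u)"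
    using second_diff_mvt[OF S f x r(2) t tr2] by blast
  have xx: "x + t *\<^sub>R v + t *\<^sub>R u = x + t *\<^sub>R u + t *\<^sub>R v" by (simp add: algebra_simps)
  have eq: "dd (\<lambda>y. dd f u y) v (x + \<sigma> *\<^sub>R u + \<tau> *\<^sub>R v) = dd (\<lambda>y. dd f v y) u (x + \<sigma>' *\<^sub>R v + \<tau>' *\<^sub>R u)"
  proof -
    have "t * t * dd (\<lambda>y. dd f u y) v (x + \<sigma> *\<^sub>R u + \<tau> *\<^sub>R v) = t * t * dd (\<lambda>y. dd f v y) u (x + \<sigma>' *\<^sub>R v + \<tau>' *\<^sub>R u)"
      using E1 E2 unfolding xx by linarith
    then show ?thesis using t by simp
  qed
  have p1: "dist (x + \<sigma> *\<^sub>R u + \<tau> *\<^sub>R v) x < m" using close[OF st] by simp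
  have p2: "dist (x + \<sigma>' *\<^sub>R v + \<tau>' *\<^sub>R u) x < m" using close[OF st'] by (simp add: add.commute)
  have inS1: "x + \<sigma> *\<^sub>R u + \<tau> *\<^sub>R v \<in> S" using p1 m r(2) by (auto simp: dist_commute)
  have inS2: "x + \<sigma>' *\<^sub>R v + \<tau>' *\<^sub>R u \<in> S" using p2 m r(2) by (auto simp: dist_commute)
  have "dist (dd (\<lambda>y. dd f u y) v (x + \<sigma> *\<^sub>R u + \<tau> *\<^sub>R v)) ?a < e" using d1(2)[OF inS1] p1 m by simp
  moreover have "dist (dd (\<lambda>y. dd f v y) u (x + \<sigma>' *\<^sub>R v + \<tau>' *\<^sub>R u)) ?b < e" using d2(2)[OF inS2] p2 m by simp
  ultimately have "\<bar>?a - ?b\<bar> < 2 * e" using eq by (simp add: dist_real_def)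
  then show False by (simp add: e_def)
qed




definition qv :: "'n::finite \<Rightarrow> (real^'n) \<times> (real^'n)" where "qv i = (axis i 1, 0)"
definition pv :: "'n::finite \<Rightarrow> (real^'n) \<times> (real^'n)" where "pv i = (0, axis i 1)"

lemma poisson_alt: "poisson f g = (\<lambda>z. \<Sum>i\<in>UNIV. dd f (qv i) z * dd g (pv i) z - dd f (pv i) z * dd g (qv i) z)"
  by (rule ext) (simp add: poisson_def qv_def pv_def)

lemma ck2_diff: "ck 2 S f \<Longrightarrow> x \<in> S \<Longrightarrow> f differentiable (at x)"
  by (simp add: numeral_2_eq_2)
lemma ck2_diff2: "ck 2 S f \<Longrightarrow> x \<in> S \<Longrightarrow> (\<lambda>y. dd f u y) differentiable (at x)"
  by (simp add: numeral_2_eq_2)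

lemma dd_poisson:
  fixes f g :: "(real^'n) \<times> (real^'n) \<Rightarrow> real"
  assumes z: "z \<in> S" and f: "ck 2 S f" and g: "ck 2 S g"
  shows "dd (poisson f g) v z = (\<Sum>i\<in>UNIV.
      dd f (qv i) z * dd (\<lambda>y. dd g (pv i) y) v z + dd (\<lambda>y. dd f (qv i) y) v z * dd g (pv i) z
    - (dd f (pv i) z * dd (\<lambda>y. dd g (qv i) y) v z + dd (\<lambda>y. dd f (pv i) y) v z * dd g (qv i) z))"
  unfolding poisson_alt
  by (rule dd_eq) (intro has_derivative_sum has_derivative_diff has_derivative_mult dd_works
      ck2_diff2[OF f z] ck2_diff2[OF g z])

lemma jacobi:
  fixes f g h :: "(real^'n) \<times> (real^'n) \<Rightarrow> real"
  assumes S: "open S" and z: "z \<in> S" and f: "ck 2 S f" and g: "ck 2 S g" and h: "ck 2 S h"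
  shows "poisson (poisson f g) h z + poisson (poisson g h) f z + poisson (poisson h f) g z = 0"
proof -
  let ?d1 = "\<lambda>\<phi> u. dd \<phi> u z"
  let ?d2 = "\<lambda>\<phi> u w. dd (\<lambda>y. dd \<phi> u y) w z"
  have sf: "?d2 f u w = ?d2 f w u" for u w using dd2_sym[OF S f z] by blast
  have sg: "?d2 g u w = ?d2 g w u" for u w using dd2_sym[OF S g z] by blast
  have sh: "?d2 h u w = ?d2 h w u" for u w using dd2_sym[OF S h z] by blast
  define F where "F i j =
     ((?d1 f (qv i) * ?d2 g (pv i) (qv j) + ?d2 f (qv i) (qv j) * ?d1 g (pv i)
     - (?d1 f (pv i) * ?d2 g (qv i) (qv j) + ?d2 f (pv i) (qv j) * ?d1 g (qv i))) * ?d1 h (pv j)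
    - (?d1 f (qv i) * ?d2 g (pv i) (pv j) + ?d2 f (qv i) (pv j) * ?d1 g (pv i)
     - (?d1 f (pv i) * ?d2 g (qv i) (pv j) + ?d2 f (pv i) (pv j) * ?d1 g (qv i))) * ?d1 h (qv j))
   + ((?d1 g (qv i) * ?d2 h (pv i) (qv j) + ?d2 g (qv i) (qv j) * ?d1 h (pv i)
     - (?d1 g (pv i) * ?d2 h (qv i) (qv j) + ?d2 g (pv i) (qv j) * ?d1 h (qv i))) * ?d1 f (pv j)
    - (?d1 g (qv i) * ?d2 h (pv i) (pv j) + ?d2 g (qv i) (pv j) * ?d1 h (pv i)
     - (?d1 g (pv i) * ?d2 h (qv i) (pv j) + ?d2 g (pv i) (pv j) * ?d1 h (qv i))) * ?d1 f (qv j))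
   + ((?d1 h (qv i) * ?d2 f (pv i) (qv j) + ?d2 h (qv i) (qv j) * ?d1 f (pv i)
     - (?d1 h (pv i) * ?d2 f (qv i) (qv j) + ?d2 h (pv i) (qv j) * ?d1 f (qv i))) * ?d1 g (pv j)
    - (?d1 h (qv i) * ?d2 f (pv i) (pv j) + ?d2 h (qv i) (pv j) * ?d1 f (pv i)
     - (?d1 h (pv i) * ?d2 f (qv i) (pv j) + ?d2 h (pv i) (pv j) * ?d1 f (qv i))) * ?d1 g (qv j))" for i j
  have tot: "poisson (poisson f g) h z + poisson (poisson g h) f z + poisson (poisson h f) g z
      = (\<Sum>j\<in>UNIV. \<Sum>i\<in>UNIV. F i j)"
    unfolding poisson_alt[of "poisson f g"] poisson_alt[of "poisson g h"] poisson_alt[of "poisson h f"]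
    unfolding dd_poisson[OF z f g] dd_poisson[OF z g h] dd_poisson[OF z h f]
    by (simp add: F_def sum.distrib[symmetric] sum_distrib_right sum_subtractf[symmetric])
  have anti: "F i j + F j i = 0" for i j
  proof -
    have e: "?d2 f (qv j) (qv i) = ?d2 f (qv i) (qv j)" "?d2 f (qv j) (pv i) = ?d2 f (pv i) (qv j)"
      "?d2 f (pv j) (qv i) = ?d2 f (qv i) (pv j)" "?d2 f (pv j) (pv i) = ?d2 f (pv i) (pv j)"
      "?d2 g (qv j) (qv i) = ?d2 g (qv i) (qv j)" "?d2 g (qv j) (pv i) = ?d2 g (pv i) (qv j)"
      "?d2 g (pv j) (qv i) = ?d2 g (qv i) (pv j)" "?d2 g (pv j) (pv i) = ?d2 g (pv i) (pv j)"
      "?d2 h (qv j) (qv i) = ?d2 h (qv i) (qv j)" "?d2 h (qv j) (pv i) = ?d2 h (pv i) (qv j)"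
      "?d2 h (pv j) (qv i) = ?d2 h (qv i) (pv j)" "?d2 h (pv j) (pv i) = ?d2 h (pv i) (pv j)"
      using sf sg sh by blast+
    show ?thesis unfolding F_def e by (simp add: algebra_simps)
  qed
  have "(\<Sum>j\<in>UNIV. \<Sum>i\<in>UNIV. F i j) = (\<Sum>j\<in>UNIV. \<Sum>i\<in>UNIV. F j i)"
    by (rule sum.swap)
  then have "2 * (\<Sum>j\<in>UNIV. \<Sum>i\<in>UNIV. F i j) = (\<Sum>j\<in>UNIV. \<Sum>i\<in>UNIV. F i j + F j i)"
    by (simp add: sum.distrib)
  also have "\<dots> = 0" by (simp add: anti)
  finally show ?thesis using tot by simp
qed




lemma perm_fix:
  assumes p: "p permutes (UNIV::'k::finite set)" and fx: "\<And>i. i \<noteq> j \<Longrightarrow> p i = i"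
  shows "p = id"
proof -
  have "p j = j"
  proof (rule ccontr)
    assume ne: "p j \<noteq> j"
    then have "p (p j) = p j" using fx by blast
    then have "p j = j" using permutes_inj[OF p] by (auto dest: injD)
    then show False using ne by simp
  qed
  then have "p i = i" for i using fx by (cases "i = j") auto
  then show ?thesis by (auto intro!: ext)
qed

lemma hd_det_id:
  fixes A :: "'a::real_normed_vector \<Rightarrow> real^'k::finite^'k"
  assumes d: "\<And>i j. ((\<lambda>w. A w $ i $ j) has_derivative A' i j) (at z)" and Az: "A z = mat 1"
  shows "((\<lambda>w. det (A w)) has_derivative (\<lambda>v. \<Sum>j\<in>UNIV. A' j j v)) (at z)"
proof -
  have H: "((\<lambda>w. det (A w)) has_derivative (\<lambda>v. \<Sum>p\<in>{p. p permutes UNIV}. of_int (sign p) *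
       (\<Sum>j\<in>UNIV. A' j (p j) v * (\<Prod>i\<in>UNIV-{j}. A z $ i $ p i)))) (at z)"
    unfolding det_def by (intro has_derivative_sum has_derivative_mult_right has_derivative_prod d)
  have T: "of_int (sign p) * (\<Sum>j\<in>UNIV. A' j (p j) v * (\<Prod>i\<in>UNIV-{j}. A z $ i $ p i))
      = (if p = id then (\<Sum>j\<in>UNIV. A' j j v) else 0)" if p: "p permutes UNIV" for p v
  proof (cases "p = id")
    case True
    then show ?thesis by (simp add: Az mat_def)
  next
    case False
    have z0: "(\<Prod>i\<in>UNIV-{j}. A z $ i $ p i) = 0" for j
    proof (rule prod_zero)
      show "finite (UNIV - {j})" by simp
      obtain i where "i \<noteq> j" "p i \<noteq> i" using perm_fix[OF p, of j] False by blast
      then show "\<exists>i\<in>UNIV - {j}. A z $ i $ p i = 0" by (intro bexI[of _ i]) (auto simp: Az mat_def)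
    qed
    show ?thesis using False by (simp only: z0) simp
  qed
  have "(\<lambda>v. \<Sum>p\<in>{p. p permutes UNIV}. of_int (sign p) *
       (\<Sum>j\<in>UNIV. A' j (p j) v * (\<Prod>i\<in>UNIV-{j}. A z $ i $ p i))) = (\<lambda>v. \<Sum>j\<in>UNIV. A' j j v)"
  proof (rule ext)
    fix v
    have "(\<Sum>p\<in>{p. p permutes UNIV}. of_int (sign p) *
       (\<Sum>j\<in>UNIV. A' j (p j) v * (\<Prod>i\<in>UNIV-{j}. A z $ i $ p i)))
       = (\<Sum>p\<in>{p. p permutes (UNIV::'k set)}. (if p = id then (\<Sum>j\<in>UNIV. A' j j v) else 0))"
      by (rule sum.cong) (auto simp: T)
    also have "\<dots> = (\<Sum>j\<in>UNIV. A' j j v)"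
      by (simp add: sum.delta' permutes_id)
    finally show "(\<Sum>p\<in>{p. p permutes UNIV}. of_int (sign p) *
       (\<Sum>j\<in>UNIV. A' j (p j) v * (\<Prod>i\<in>UNIV-{j}. A z $ i $ p i))) = (\<Sum>j\<in>UNIV. A' j j v)" .
  qed
  then show ?thesis using H by simp
qed

lemma neg_matrix_mult: "(- A) ** (B::real^'k::finite^'k) = - (A ** B)"
  by (simp add: matrix_matrix_mult_def vec_eq_iff sum_negf)
lemma matrix_mult_neg: "A ** (- B::real^'k::finite^'k) = - (A ** B)"
  by (simp add: matrix_matrix_mult_def vec_eq_iff sum_negf)

lemma inv_antisym:
  fixes G :: "real^'k::finite^'k"
  assumes inv: "invertible G" and anti: "transpose G = - G"
  shows "matrix_inv G $ a $ b = - matrix_inv G $ b $ a"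
proof -
  let ?P = "matrix_inv G"
  have "transpose ?P ** transpose G = mat 1"
    using matrix_inv_props(1)[OF inv] by (metis matrix_transpose_mul transpose_mat)
  then have e: "(- transpose ?P) ** G = mat 1" using anti by (simp add: neg_matrix_mult matrix_mult_neg)
  have "- transpose ?P = (- transpose ?P) ** (G ** ?P)" by (simp add: matrix_inv_props(1)[OF inv])
  also have "\<dots> = ?P" by (simp add: matrix_mul_assoc e)
  finally have "- transpose ?P = ?P" .
  then have "(- transpose ?P) $ a $ b = ?P $ a $ b" by simp
  then show ?thesis by (simp add: transpose_def)
qed




lemma ck_poisson:
  fixes f g :: "(real^'n) \<times> (real^'n) \<Rightarrow> real"
  assumes S: "open S" and f: "ck (Suc k) S f" and g: "ck (Suc k) S g"
  shows "ck k S (poisson f g)"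
  unfolding poisson_alt
proof (rule ck_sum[OF S])
  fix i
  have "ck k S (\<lambda>x. dd f u x)" "ck k S (\<lambda>x. dd g u x)" for u
    using f g ck.simps(2)[of k S f] ck.simps(2)[of k S g] by blast+
  then show "ck k S (\<lambda>z. dd f (qv i) z * dd g (pv i) z - dd f (pv i) z * dd g (qv i) z)"
    by (intro ck_diff[OF S] ck_mult[OF S])
qed

lemma poisson_anti: "poisson f g z = - poisson g f z"
  unfolding poisson_def by (simp add: sum_negf[symmetric] algebra_simps)

lemma poisson_uminus:
  assumes "F differentiable (at z)"
  shows "poisson (\<lambda>w. - F w) g z = - poisson F g z"
proof -
  have "dd (\<lambda>w. - F w) v z = - dd F v z" for v
    by (rule dd_eq) (intro has_derivative_minus dd_works assms)
  then show ?thesis unfolding poisson_alt by (simp add: sum_negf[symmetric] algebra_simps)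
qed

lemma poisson_lincomb:
  assumes "\<And>v. dd h v z = (\<Sum>k\<in>K. \<Sum>c\<in>C. coef k c * dd (F k c) v z)"
  shows "poisson h g z = (\<Sum>k\<in>K. \<Sum>c\<in>C. coef k c * poisson (F k c) g z)"
proof -
  have "poisson h g z = (\<Sum>i\<in>UNIV. (\<Sum>k\<in>K. \<Sum>c\<in>C. coef k c * dd (F k c) (qv i) z) * dd g (pv i) z
          - (\<Sum>k\<in>K. \<Sum>c\<in>C. coef k c * dd (F k c) (pv i) z) * dd g (qv i) z)"
    unfolding poisson_alt assms ..
  also have "\<dots> = (\<Sum>i\<in>UNIV. \<Sum>k\<in>K. \<Sum>c\<in>C. coef k c * (dd (F k c) (qv i) z * dd g (pv i) z
          - dd (F k c) (pv i) z * dd g (qv i) z))"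
    by (simp add: sum_distrib_left sum_distrib_right sum_subtractf[symmetric] algebra_simps)
  also have "\<dots> = (\<Sum>k\<in>K. \<Sum>i\<in>UNIV. \<Sum>c\<in>C. coef k c * (dd (F k c) (qv i) z * dd g (pv i) z
          - dd (F k c) (pv i) z * dd g (qv i) z))"
    by (rule sum.swap)
  also have "\<dots> = (\<Sum>k\<in>K. \<Sum>c\<in>C. \<Sum>i\<in>UNIV. coef k c * (dd (F k c) (qv i) z * dd g (pv i) z
          - dd (F k c) (pv i) z * dd g (qv i) z))"
    by (rule sum.cong[OF refl], rule sum.swap)
  also have "\<dots> = (\<Sum>k\<in>K. \<Sum>c\<in>C. coef k c * poisson (F k c) g z)"
    unfolding poisson_alt by (simp add: sum_distrib_left)
  finally show ?thesis .
qed

lemma rot3: "(\<Sum>b\<in>A. \<Sum>k\<in>A. \<Sum>c\<in>A. G k c b) = (\<Sum>b\<in>A. \<Sum>k\<in>A. \<Sum>c\<in>A. G b k c)"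
proof -
  have "(\<Sum>b\<in>A. \<Sum>k\<in>A. \<Sum>c\<in>A. G k c b) = (\<Sum>k\<in>A. \<Sum>b\<in>A. \<Sum>c\<in>A. G k c b)" by (rule sum.swap)
  also have "\<dots> = (\<Sum>k\<in>A. \<Sum>c\<in>A. \<Sum>b\<in>A. G k c b)" by (rule sum.cong[OF refl], rule sum.swap)
  finally show ?thesis .
qed

lemma swap23: "(\<Sum>b\<in>A. \<Sum>k\<in>A. \<Sum>c\<in>A. G b k c) = (\<Sum>b\<in>A. \<Sum>k\<in>A. \<Sum>c\<in>A. G b c k)"
  by (rule sum.cong[OF refl], rule sum.swap)

lemma final_alg:
  fixes P :: "'k::finite \<Rightarrow> 'k \<Rightarrow> real" and T :: "'k \<Rightarrow> 'k \<Rightarrow> 'k \<Rightarrow> real"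
  assumes Pa: "\<And>x y. P x y = - P y x" and Ta: "\<And>k c b. T c k b = - T k c b"
    and Tc: "\<And>k c b. T k c b + T c b k + T b k c = 0"
  shows "(\<Sum>b\<in>UNIV. \<Sum>k\<in>UNIV. \<Sum>c\<in>UNIV. (- s * (P a k * P c b) + s / 2 * (P a b * P c k)) * T k c b) = 0"
proof -
  define B where "B = (\<Sum>b\<in>UNIV. \<Sum>k\<in>UNIV. \<Sum>c\<in>UNIV. P a k * P c b * T k c b)"
  define A where "A = (\<Sum>b\<in>UNIV. \<Sum>k\<in>UNIV. \<Sum>c\<in>UNIV. P a b * P c k * T k c b)"
  have TT: "T k c b = - T c b k - T b k c" for k c b using Tc[of k c b] by linarith
  have "B = (\<Sum>b\<in>UNIV. \<Sum>k\<in>UNIV. \<Sum>c\<in>UNIV. - (P a k * P c b * T c b k) - P a k * P c b * T b k c)"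
    unfolding B_def by (subst TT) (simp add: algebra_simps)
  also have "\<dots> = - (\<Sum>b\<in>UNIV. \<Sum>k\<in>UNIV. \<Sum>c\<in>UNIV. P a k * P c b * T c b k)
                  - (\<Sum>b\<in>UNIV. \<Sum>k\<in>UNIV. \<Sum>c\<in>UNIV. P a k * P c b * T b k c)"
    by (simp add: sum_subtractf sum_negf)
  also have "(\<Sum>b\<in>UNIV. \<Sum>k\<in>UNIV. \<Sum>c\<in>UNIV. P a k * P c b * T c b k)
      = (\<Sum>b\<in>UNIV. \<Sum>k\<in>UNIV. \<Sum>c\<in>UNIV. P a b * P k c * T k c b)"
    by (rule rot3[where G="\<lambda>b k c. P a b * P k c * T k c b"])
  also have "\<dots> = - A" unfolding A_def sum_negf[symmetric]
  proof (rule sum.cong[OF refl])+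
    fix b k c :: 'k
    show "P a b * P k c * T k c b = - (P a b * P c k * T k c b)" using Pa[of k c] by simp
  qed
  also have "(\<Sum>b\<in>UNIV. \<Sum>k\<in>UNIV. \<Sum>c\<in>UNIV. P a k * P c b * T b k c)
      = (\<Sum>b\<in>UNIV. \<Sum>k\<in>UNIV. \<Sum>c\<in>UNIV. P a c * P b k * T k c b)"
    using rot3[where G="\<lambda>x y w. P a y * P w x * T x y w"] by simp
  also have "\<dots> = (\<Sum>b\<in>UNIV. \<Sum>k\<in>UNIV. \<Sum>c\<in>UNIV. P a k * P b c * T c k b)"
    by (rule swap23[where G="\<lambda>b k c. P a c * P b k * T k c b"])
  also have "\<dots> = B" unfolding B_def
  proof (rule sum.cong[OF refl])+
    fix b k c :: 'k
    show "P a k * P b c * T c k b = P a k * P c b * T k c b" using Pa[of b c] Ta[of k c b] by simp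
  qed
  finally have "B = A - B" by simp
  have "(\<Sum>b\<in>UNIV. \<Sum>k\<in>UNIV. \<Sum>c\<in>UNIV. (- s * (P a k * P c b) + s / 2 * (P a b * P c k)) * T k c b)
      = (\<Sum>b\<in>UNIV. \<Sum>k\<in>UNIV. \<Sum>c\<in>UNIV. (- s) * (P a k * P c b * T k c b) + (s / 2) * (P a b * P c k * T k c b))"
    by (rule sum.cong[OF refl])+ (simp add: algebra_simps)
  also have "\<dots> = - s * B + s / 2 * A"
    unfolding A_def B_def by (simp only: sum.distrib sum_distrib_left)
  finally show ?thesis using \<open>B = A - B\<close> by simp
qed




lemma sqrt_abs_deriv:
  assumes D: "(D::real) \<noteq> 0"
  shows "DERIV (\<lambda>x. sqrt \<bar>x\<bar>) D :> inverse (sqrt \<bar>D\<bar>) / 2 * (D / \<bar>D\<bar>)"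
proof -
  have eqf: "(\<lambda>x. sqrt \<bar>x\<bar>) = (\<lambda>x. sqrt (sqrt (x * x)))" by (rule ext) (simp only: real_sqrt_abs2)
  have p1: "D * D > 0" using D by (cases "D > 0") (auto simp: mult_neg_neg)
  have p2: "sqrt (D * D) > 0" using p1 by (rule real_sqrt_gt_zero)
  have d1: "DERIV (\<lambda>x. x * x) D :> D + D" by (auto intro!: derivative_eq_intros)
  have d2: "DERIV (\<lambda>x. sqrt (x * x)) D :> inverse (sqrt (D * D)) / 2 * (D + D)"
    by (rule DERIV_chain2[OF DERIV_real_sqrt[OF p1] d1])
  have d3: "DERIV (\<lambda>x. sqrt (sqrt (x * x))) D :> inverse (sqrt (sqrt (D * D))) / 2 * (inverse (sqrt (D * D)) / 2 * (D + D))"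
    by (rule DERIV_chain2[OF DERIV_real_sqrt[OF p2] d2])
  have s1: "sqrt (D * D) = \<bar>D\<bar>" by (rule real_sqrt_abs2)
  have s2: "inverse \<bar>D\<bar> / 2 * (D + D) = D / \<bar>D\<bar>" using D by (simp add: field_simps)
  have "inverse (sqrt (sqrt (D * D))) / 2 * (inverse (sqrt (D * D)) / 2 * (D + D)) = inverse (sqrt \<bar>D\<bar>) / 2 * (D / \<bar>D\<bar>)"
    unfolding s1 s2 ..
  then show ?thesis using d3 unfolding eqf by (simp only:)
qed

lemma alg1:
  fixes D t :: real
  assumes D: "D \<noteq> 0"
  shows "D * t * (inverse (sqrt \<bar>D\<bar>) / 2 * (D / \<bar>D\<bar>)) = sqrt \<bar>D\<bar> / 2 * t"
proof -
  define r where "r = sqrt \<bar>D\<bar>"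
  have r: "r > 0" using D by (simp add: r_def)
  have a: "D * (D / \<bar>D\<bar>) = \<bar>D\<bar>"
    using D by (metis abs_mult_self_eq abs_eq_0 nonzero_mult_div_cancel_right times_divide_eq_right)
  have b: "\<bar>D\<bar> = r * r" unfolding r_def by simp
  have "D * t * (inverse r / 2 * (D / \<bar>D\<bar>)) = (D * (D / \<bar>D\<bar>)) * t * (inverse r / 2)"
    by (simp only: ac_simps)
  also have "\<dots> = \<bar>D\<bar> * t * (inverse r / 2)" by (simp only: a)
  also have "\<dots> = r * r * t * (inverse r / 2)" by (simp only: b)
  also have "\<dots> = r / 2 * t" using r by (simp add: field_simps)
  finally show ?thesis unfolding r_def .
qed

locale gset =
  fixes Xi :: "(real^'n::finite) \<times> (real^'n) \<Rightarrow> real^'k::finite" and U and z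
  assumes U: "open U" and zU: "z \<in> U" and ck2: "\<And>c. ck 2 U (\<lambda>w. Xi w $ c)"
    and Ginv: "\<And>w. w \<in> U \<Longrightarrow> invertible (Gamma Xi w)"
begin

definition "PP = matrix_inv (Gamma Xi z)"
definition "dG c d v = dd (\<lambda>w. Gamma Xi w $ c $ d) v z"
definition "tr v = (\<Sum>j\<in>UNIV. \<Sum>k\<in>UNIV. PP $ j $ k * dG k j v)"

lemma G_entry: "(\<lambda>w. Gamma Xi w $ c $ d) = poisson (\<lambda>w. Xi w $ c) (\<lambda>w. Xi w $ d)"
  by (rule ext) (simp add: Gamma_def)

lemma G_ck1: "ck 1 U (\<lambda>w. Gamma Xi w $ c $ d)"
  unfolding G_entry by (rule ck_poisson[OF U]) (use ck2 in \<open>simp_all add: numeral_2_eq_2\<close>)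

lemma G_diff: "w \<in> U \<Longrightarrow> (\<lambda>w. Gamma Xi w $ c $ d) differentiable (at w)"
  using G_ck1[of c d] by simp

lemma G_hd: "((\<lambda>w. Gamma Xi w $ c $ d) has_derivative dG c d) (at z)"
proof -
  have "dG c d = (\<lambda>v. dd (\<lambda>w. Gamma Xi w $ c $ d) v z)" by (rule ext) (simp add: dG_def)
  then show ?thesis using dd_works[OF G_diff[OF zU]] by simp
qed

lemma Gz_inv: "invertible (Gamma Xi z)" using Ginv zU by blast

lemma det_hd: "((\<lambda>w. det (Gamma Xi w)) has_derivative (\<lambda>v. det (Gamma Xi z) * tr v)) (at z)"
proof -
  have PG: "PP ** Gamma Xi z = mat 1" unfolding PP_def by (rule matrix_inv_props(2)[OF Gz_inv])
  have dPG: "det PP * det (Gamma Xi z) = 1" using det_mul[of PP "Gamma Xi z"] PG by simp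
  have eq: "(\<lambda>w. det (Gamma Xi w)) = (\<lambda>w. det (Gamma Xi z) * det (PP ** Gamma Xi w))"
  proof (rule ext)
    fix w
    have "det (Gamma Xi z) * det (PP ** Gamma Xi w) = (det PP * det (Gamma Xi z)) * det (Gamma Xi w)"
      by (simp add: det_mul)
    then show "det (Gamma Xi w) = det (Gamma Xi z) * det (PP ** Gamma Xi w)" using dPG by simp
  qed
  have Ahd: "((\<lambda>w. (PP ** Gamma Xi w) $ i $ j) has_derivative (\<lambda>v. \<Sum>k\<in>UNIV. PP $ i $ k * dG k j v)) (at z)" for i j
  proof -
    have "(\<lambda>w. (PP ** Gamma Xi w) $ i $ j) = (\<lambda>w. \<Sum>k\<in>UNIV. PP $ i $ k * Gamma Xi w $ k $ j)"
      by (simp add: matrix_matrix_mult_def)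
    moreover have "((\<lambda>w. \<Sum>k\<in>UNIV. PP $ i $ k * Gamma Xi w $ k $ j) has_derivative (\<lambda>v. \<Sum>k\<in>UNIV. PP $ i $ k * dG k j v)) (at z)"
      by (intro has_derivative_sum has_derivative_mult_right G_hd)
    ultimately show ?thesis by simp
  qed
  have "((\<lambda>w. det (PP ** Gamma Xi w)) has_derivative (\<lambda>v. \<Sum>j\<in>UNIV. \<Sum>k\<in>UNIV. PP $ j $ k * dG k j v)) (at z)"
    by (rule hd_det_id[OF Ahd PG])
  then have "((\<lambda>w. det (Gamma Xi z) * det (PP ** Gamma Xi w)) has_derivative (\<lambda>v. det (Gamma Xi z) * tr v)) (at z)"
    unfolding tr_def by (rule has_derivative_mult_right)
  then show ?thesis using eq by simp
qed

lemma P_ck1: "ck 1 U (\<lambda>w. matrix_inv (Gamma Xi w) $ a $ b)"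
  by (rule ck_matrix_inv[OF U G_ck1 Ginv])

lemma P_diff: "w \<in> U \<Longrightarrow> (\<lambda>w. matrix_inv (Gamma Xi w) $ a $ b) differentiable (at w)"
  using P_ck1[of a b] by simp

lemma P_dd: "dd (\<lambda>w. matrix_inv (Gamma Xi w) $ a $ b) v z
   = - (\<Sum>c\<in>UNIV. \<Sum>k\<in>UNIV. PP $ a $ k * dG k c v * PP $ c $ b)"
proof -
  define dP where "dP a k = dd (\<lambda>w. matrix_inv (Gamma Xi w) $ a $ k) v z" for a k
  have E: "(\<Sum>k\<in>UNIV. dP a k * Gamma Xi z $ k $ c) = - (\<Sum>k\<in>UNIV. PP $ a $ k * dG k c v)" for c
  proof -
    have loc: "(\<Sum>k\<in>UNIV. matrix_inv (Gamma Xi w) $ a $ k * Gamma Xi w $ k $ c) = (if a = c then 1 else 0)"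
      if "w \<in> U" for w
    proof -
      have "(matrix_inv (Gamma Xi w) ** Gamma Xi w) $ a $ c = mat 1 $ a $ c"
        using matrix_inv_props(2)[OF Ginv[OF that]] by simp
      then show ?thesis by (simp add: matrix_matrix_mult_def mat_def)
    qed
    have "dd (\<lambda>w. \<Sum>k\<in>UNIV. matrix_inv (Gamma Xi w) $ a $ k * Gamma Xi w $ k $ c) v z
        = dd (\<lambda>w. (if a = c then 1 else 0)) v z"
      by (rule dd_local[OF U zU loc])
    also have "\<dots> = 0" by (simp add: dd_const)
    finally have z0: "dd (\<lambda>w. \<Sum>k\<in>UNIV. matrix_inv (Gamma Xi w) $ a $ k * Gamma Xi w $ k $ c) v z = 0" .
    have "dd (\<lambda>w. \<Sum>k\<in>UNIV. matrix_inv (Gamma Xi w) $ a $ k * Gamma Xi w $ k $ c) v z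
        = (\<Sum>k\<in>UNIV. matrix_inv (Gamma Xi z) $ a $ k * dG k c v + dP a k * Gamma Xi z $ k $ c)"
      unfolding dP_def dG_def
      by (rule dd_eq) (intro has_derivative_sum has_derivative_mult dd_works P_diff G_diff zU)
    then have "(\<Sum>k\<in>UNIV. PP $ a $ k * dG k c v) + (\<Sum>k\<in>UNIV. dP a k * Gamma Xi z $ k $ c) = 0"
      using z0 by (simp add: sum.distrib PP_def)
    then show ?thesis by linarith
  qed
  have GP: "Gamma Xi z ** PP = mat 1" unfolding PP_def by (rule matrix_inv_props(1)[OF Gz_inv])
  have "(\<Sum>k\<in>UNIV. dP a k * (mat 1 :: real^'k^'k) $ k $ b) = (\<Sum>k\<in>UNIV. if k = b then dP a k else 0)"
    by (rule sum.cong) (auto simp: mat_def)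
  then have "dP a b = (\<Sum>k\<in>UNIV. dP a k * (mat 1 :: real^'k^'k) $ k $ b)"
    by simp
  also have "\<dots> = (\<Sum>k\<in>UNIV. dP a k * (\<Sum>c\<in>UNIV. Gamma Xi z $ k $ c * PP $ c $ b))"
    unfolding GP[symmetric] by (simp add: matrix_matrix_mult_def)
  also have "\<dots> = (\<Sum>k\<in>UNIV. \<Sum>c\<in>UNIV. dP a k * Gamma Xi z $ k $ c * PP $ c $ b)"
    by (simp add: sum_distrib_left mult.assoc)
  also have "\<dots> = (\<Sum>c\<in>UNIV. \<Sum>k\<in>UNIV. dP a k * Gamma Xi z $ k $ c * PP $ c $ b)"
    by (rule sum.swap)
  also have "\<dots> = (\<Sum>c\<in>UNIV. (\<Sum>k\<in>UNIV. dP a k * Gamma Xi z $ k $ c) * PP $ c $ b)"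
    by (simp add: sum_distrib_right)
  also have "\<dots> = (\<Sum>c\<in>UNIV. - (\<Sum>k\<in>UNIV. PP $ a $ k * dG k c v) * PP $ c $ b)"
    by (simp add: E)
  also have "\<dots> = - (\<Sum>c\<in>UNIV. \<Sum>k\<in>UNIV. PP $ a $ k * dG k c v * PP $ c $ b)"
    by (simp add: sum_distrib_right sum_negf)
  finally show ?thesis unfolding dP_def .
qed


definition "sz = sqrt \<bar>det (Gamma Xi z)\<bar>"

lemma detz_nz: "det (Gamma Xi z) \<noteq> 0" using Gz_inv invertible_det_nz by blast

lemma s_hd: "((\<lambda>w. sqrt \<bar>det (Gamma Xi w)\<bar>) has_derivative (\<lambda>v. sz / 2 * tr v)) (at z)"
proof -
  let ?D = "det (Gamma Xi z)"
  have h: "((\<lambda>w. sqrt \<bar>det (Gamma Xi w)\<bar>) has_derivative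
      (\<lambda>v. det (Gamma Xi z) * tr v * (inverse (sqrt \<bar>?D\<bar>) / 2 * (?D / \<bar>?D\<bar>)))) (at z)"
    by (rule DERIV_compose_FDERIV[OF sqrt_abs_deriv[OF detz_nz] det_hd])
  have e: "(\<lambda>v. det (Gamma Xi z) * tr v * (inverse (sqrt \<bar>?D\<bar>) / 2 * (?D / \<bar>?D\<bar>))) = (\<lambda>v. sz / 2 * tr v)"
    by (rule ext) (unfold sz_def, rule alg1[OF detz_nz])
  from h show ?thesis unfolding e .
qed

lemma s_diff: "(\<lambda>w. sqrt \<bar>det (Gamma Xi w)\<bar>) differentiable (at z)"
  using s_hd unfolding differentiable_def by blast

lemma h_dd: "dd (\<lambda>w. sqrt \<bar>det (Gamma Xi w)\<bar> * matrix_inv (Gamma Xi w) $ a $ b) v z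
   = (\<Sum>k\<in>UNIV. \<Sum>c\<in>UNIV. (- sz * (PP $ a $ k * PP $ c $ b) + sz / 2 * (PP $ a $ b * PP $ c $ k)) * dG k c v)"
proof -
  have "dd (\<lambda>w. sqrt \<bar>det (Gamma Xi w)\<bar> * matrix_inv (Gamma Xi w) $ a $ b) v z
     = sz * dd (\<lambda>w. matrix_inv (Gamma Xi w) $ a $ b) v z + sz / 2 * tr v * PP $ a $ b"
    by (rule dd_eq) (intro has_derivative_mult[OF s_hd dd_works[OF P_diff[OF zU]], 
        unfolded sz_def[symmetric] PP_def[symmetric]])
  also have "\<dots> = (\<Sum>c\<in>UNIV. \<Sum>k\<in>UNIV. (- sz * (PP $ a $ k * PP $ c $ b) + sz / 2 * (PP $ a $ b * PP $ c $ k)) * dG k c v)"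
    unfolding P_dd tr_def
    by (simp add: sum_distrib_left sum_distrib_right sum_negf[symmetric] sum.distrib[symmetric] algebra_simps)
  also have "\<dots> = (\<Sum>k\<in>UNIV. \<Sum>c\<in>UNIV. (- sz * (PP $ a $ k * PP $ c $ b) + sz / 2 * (PP $ a $ b * PP $ c $ k)) * dG k c v)"
    by (rule sum.swap)
  finally show ?thesis .
qed

lemma main_abs:
  "(\<Sum>b\<in>UNIV. poisson (\<lambda>w. sqrt \<bar>det (Gamma Xi w)\<bar> * matrix_inv (Gamma Xi w) $ a $ b) (\<lambda>w. Xi w $ b) z) = 0"
proof -
  define T where "T k c b = poisson (\<lambda>w. Gamma Xi w $ k $ c) (\<lambda>w. Xi w $ b) z" for k c b
  have ck2': "ck 2 U (\<lambda>w. Xi w $ c)" for c by (rule ck2)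
  have step: "poisson (\<lambda>w. sqrt \<bar>det (Gamma Xi w)\<bar> * matrix_inv (Gamma Xi w) $ a $ b) (\<lambda>w. Xi w $ b) z
     = (\<Sum>k\<in>UNIV. \<Sum>c\<in>UNIV. (- sz * (PP $ a $ k * PP $ c $ b) + sz / 2 * (PP $ a $ b * PP $ c $ k)) * T k c b)" for b
    unfolding T_def dG_def by (rule poisson_lincomb) (rule h_dd[unfolded dG_def])
  have Pa: "PP $ x $ y = - PP $ y $ x" for x y
    unfolding PP_def
  proof (rule inv_antisym[OF Gz_inv])
    have "transpose (Gamma Xi z) $ i $ j = (- Gamma Xi z) $ i $ j" for i j
      using poisson_anti[of "\<lambda>w. Xi w $ j" "\<lambda>w. Xi w $ i" z] by (simp add: transpose_def Gamma_def)
    then show "transpose (Gamma Xi z) = - Gamma Xi z"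
      by (simp add: vec_eq_iff)
  qed
  have Ta: "T c k b = - T k c b" for k c b
  proof -
    have "(\<lambda>w. Gamma Xi w $ c $ k) = (\<lambda>w. - Gamma Xi w $ k $ c)"
    proof (rule ext)
      fix w show "Gamma Xi w $ c $ k = - Gamma Xi w $ k $ c"
        using poisson_anti[of "\<lambda>w. Xi w $ c" "\<lambda>w. Xi w $ k" w] by (simp add: Gamma_def)
    qed
    then show ?thesis unfolding T_def using poisson_uminus[OF G_diff[OF zU]] by simp
  qed
  have Tc: "T k c b + T c b k + T b k c = 0" for k c b
    unfolding T_def G_entry by (rule jacobi[OF U zU ck2' ck2' ck2'])
  have "(\<Sum>b\<in>UNIV. poisson (\<lambda>w. sqrt \<bar>det (Gamma Xi w)\<bar> * matrix_inv (Gamma Xi w) $ a $ b) (\<lambda>w. Xi w $ b) z)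
     = (\<Sum>b\<in>UNIV. \<Sum>k\<in>UNIV. \<Sum>c\<in>UNIV. (- sz * (PP $ a $ k * PP $ c $ b) + sz / 2 * (PP $ a $ b * PP $ c $ k)) * T k c b)"
    by (simp add: step)
  also have "\<dots> = 0"
    by (rule final_alg[where P="\<lambda>x y. PP $ x $ y"]) (rule Pa, rule Ta, rule Tc)
  finally show ?thesis .
qed

end




lemma Xi_ck:
  fixes \<xi> :: "real^'n \<Rightarrow> real^'m" and M :: "real^'n^'n" and \<Xi> :: "(real^'n) \<times> (real^'n) \<Rightarrow> real^('m + 'm)"
  assumes smooth: "\<forall>j. smooth_fun (\<lambda>q. \<xi> q $ j)" and U: "open U"
    and G_inv: "\<forall>q p. (q, p) \<in> U \<longrightarrow> invertible (G_M \<xi> M q)"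
    and choice: "\<Xi> = Xi_v \<xi> M \<or> \<Xi> = Xi_p \<xi> M"
  shows "ck k U (\<lambda>w. \<Xi> w $ c)"
proof -
  have Ckg: "Ck k (\<lambda>q. \<xi> q $ j)" for k j using smooth unfolding smooth_fun_def by blast
  have Ckd: "Ck k (\<lambda>x. dd (\<lambda>q. \<xi> q $ j) u x)" for k j u
    using Ckg[of "Suc k" j] by simp
  have base: "ck k U (\<lambda>w. \<xi> (fst w) $ j)" for j
    by (rule Ck_compose_linear[OF Ckg bounded_linear_fst U])
  have dbase: "ck k U (\<lambda>w. dd (\<lambda>q. \<xi> q $ j) u (fst w))" for j u
    by (rule Ck_compose_linear[OF Ckd bounded_linear_fst U])
  have snd_c: "ck k U (\<lambda>w. snd w $ l)" for l
    by (rule ck_linear) (rule bounded_linear_compose[OF bounded_linear_vec_nth bounded_linear_snd])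
  have lin: "ck k U (\<lambda>w. (A *v snd w) $ i)" for A :: "real^'n^'n" and i
    unfolding matrix_vector_mult_def
    by (simp, intro ck_sum[OF U] ck_mult[OF U] ck_const snd_c)
  have vxi: "ck k U (\<lambda>w. v_xi \<xi> M (fst w) (snd w) $ j)" for j
    unfolding v_xi_def grad_xi_def inner_vec_def
    by (simp, intro ck_sum[OF U] ck_mult[OF U] dbase lin)
  have gm: "ck k U (\<lambda>w. G_M \<xi> M (fst w) $ j $ l)" for j l
    unfolding G_M_def grad_xi_def inner_vec_def matrix_vector_mult_def
    by (simp, intro ck_sum[OF U] ck_mult[OF U] dbase ck_const)
  have ginv: "invertible (G_M \<xi> M (fst w))" if "w \<in> U" for w
    using G_inv that by (cases w) auto
  have pinv: "ck k U (\<lambda>w. matrix_inv (G_M \<xi> M (fst w)) $ j $ l)" for j l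
    by (rule ck_matrix_inv[OF U gm ginv])
  have pxi: "ck k U (\<lambda>w. p_xi \<xi> M (fst w) (snd w) $ j)" for j
    unfolding p_xi_def matrix_vector_mult_def
    by (simp, intro ck_sum[OF U] ck_mult[OF U] pinv vxi)
  show ?thesis
  proof (cases c)
    case (Inl j)
    then show ?thesis using choice base by (auto simp: Xi_v_def Xi_p_def)
  next
    case (Inr j)
    then show ?thesis using choice vxi pxi by (auto simp: Xi_v_def Xi_p_def)
  qed
qed

theorem mainTheorem13:
  fixes N :: nat
    and \<xi> :: "real^'n \<Rightarrow> real^'m"
    and M :: "real^'n^'n"
    and \<Xi> :: "(real^'n) \<times> (real^'n) \<Rightarrow> real^('m + 'm)"
    and U :: "((real^'n) \<times> (real^'n)) set"
  assumes dim: "CARD('n) = 3 * N"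
    and smooth: "\<forall>j. smooth_fun (\<lambda>q. \<xi> q $ j)"
    and M_sym: "transpose M = M"
    and M_pd: "\<forall>x. x \<noteq> 0 \<longrightarrow> x \<bullet> (M *v x) > 0"
    and G_inv: "\<forall>q p. (q, p) \<in> U \<longrightarrow> invertible (G_M \<xi> M q)"
    and Xi_choice: "\<Xi> = Xi_v \<xi> M \<or> \<Xi> = Xi_p \<xi> M"
    and U_open: "open U"
    and Gamma_inv: "\<forall>z\<in>U. invertible (Gamma \<Xi> z)"
  shows "\<forall>z\<in>U. \<forall>a. (\<Sum>b\<in>UNIV.
           poisson (\<lambda>w. sqrt \<bar>det (Gamma \<Xi> w)\<bar> * matrix_inv (Gamma \<Xi> w) $ a $ b)
                   (\<lambda>w. \<Xi> w $ b) z) = 0"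
proof (intro ballI allI)
  fix z a assume z: "z \<in> U"
  interpret gset \<Xi> U z
  proof
    show "open U" by (rule U_open)
    show "z \<in> U" by (rule z)
    show "ck 2 U (\<lambda>w. \<Xi> w $ c)" for c by (rule Xi_ck[OF smooth U_open G_inv Xi_choice])
    show "invertible (Gamma \<Xi> w)" if "w \<in> U" for w using Gamma_inv that by blast
  qed
  show "(\<Sum>b\<in>UNIV. poisson (\<lambda>w. sqrt \<bar>det (Gamma \<Xi> w)\<bar> * matrix_inv (Gamma \<Xi> w) $ a $ b)
                   (\<lambda>w. \<Xi> w $ b) z) = 0"
    by (rule main_abs)
qed


end
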